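(* For every real $M\ge2$, $$\frac12\log(2M+1)<\frac{M+1}{i}\mathcal{F}_M(iM)=K\Big(\frac{M}{M+1}\Big)<\frac12\Big(\frac{12}{5}+\log(2M+1)\Big),$$ where $\frac{M+1}{i}\mathcal{F}_M(iM)=(M+1)\displaystyle\int_0^M\frac{dt}{\sqrt{(M^2-t^2)((M+1)^2-t^2)}}$ and $K(k)=\displaystyle\int_0^1\frac{dx}{\sqrt{(1-x^2)(1-k^2x^2)}}$ is the complete elliptic integral of the first kind.
   Context: $\mathcal{F}_M(z)=\int_0^z\frac{d\zeta}{\sqrt{(\zeta^2-(iM)^2)(\zeta^2-(i(M+1))^2)}}$, $z$ in the closed left half-plane, with the branch of the square root positive on the positive real axis; $\mathcal{F}_M(iM)$ is the integral along the segment $[0,iM]$ of the imaginary axis. *)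

theory Defs
  imports "HOL-Complex_Analysis.Complex_Analysis"
begin

text \<open>On the segment [0, iM]
  (z = i t, 0 \<le> t \<le> M) the radicand equals (M^2-t^2)((M+1)^2-t^2) \<ge> 0, so the
  principal square root csqrt agrees there with the branch positive on the positive real axis
  (continued into the left half-plane).\<close>
definition FM_integrand :: "real \<Rightarrow> complex \<Rightarrow> complex" where
  "FM_integrand M z = 1 / csqrt ((z^2 - (\<i> * of_real M)^2) * (z^2 - (\<i> * of_real (M+1))^2))"

definition FM_at_iM :: "real \<Rightarrow> complex" where
  "FM_at_iM M = contour_integral (linepath 0 (\<i> * of_real M)) (FM_integrand M)"

definition ellipK :: "real \<Rightarrow> real" where
  "ellipK k = integral {0..1} (\<lambda>x. 1 / sqrt ((1 - x^2) * (1 - k^2 * x^2)))"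

end

theory Submission
  imports Defs
begin

lemma dsqrt:
  fixes g :: "real \<Rightarrow> real"
  assumes "0 < g x" "(g has_real_derivative g') (at x)"
  shows "((\<lambda>x. sqrt (g x)) has_real_derivative g' / (2* sqrt(g x))) (at x)"
proof -
  have "((\<lambda>x. sqrt (g x)) has_real_derivative inverse (sqrt (g x)) / 2 * g') (at x)"
    by (rule DERIV_chain2[OF DERIV_real_sqrt[OF assms(1)] assms(2)])
  then show ?thesis by (simp add: field_simps)
qed

lemma derivG:
  fixes k x :: real
  assumes k: "0<k" "k<1" and x: "0<x" "x<1"
  shows "((\<lambda>x. -(1/k) * ln (k * sqrt(1-x^2) + sqrt(1-k^2*x^2))) has_real_derivative
          x / sqrt((1-x^2)*(1-k^2*x^2))) (at x)"
proof -
  have a: "0 < 1-x^2" using x by (simp add: power_less_one_iff abs_less_iff)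
  have kx: "k^2*x^2 < 1" using k x by (metis mult_strict_mono' power_less_one_iff power_strict_mono zero_le_power2 less_eq_real_def mult_1 zero_le_numeral zero_less_numeral)
  hence b: "0 < 1-k^2*x^2" by simp
  have s1: "sqrt(1-x^2) > 0" using a by simp
  have s2: "sqrt(1-k^2*x^2) > 0" using b by simp
  have A: "k * sqrt(1-x^2) + sqrt(1-k^2*x^2) > 0" using s1 s2 k by (metis add_pos_pos mult_pos_pos)
  have d1: "((\<lambda>x. sqrt(1-x^2)) has_real_derivative (-2*x)/(2* sqrt(1-x^2))) (at x)"
    using a by (intro dsqrt) (auto intro!: derivative_eq_intros)
  have d2: "((\<lambda>x. sqrt(1-k^2*x^2)) has_real_derivative (-2*k^2*x)/(2* sqrt(1-k^2*x^2))) (at x)"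
    using b by (intro dsqrt) (auto intro!: derivative_eq_intros)
  have dA: "((\<lambda>x. k * sqrt(1-x^2) + sqrt(1-k^2*x^2)) has_real_derivative
      (k*((-2*x)/(2* sqrt(1-x^2))) + (-2*k^2*x)/(2* sqrt(1-k^2*x^2)))) (at x)"
    by (intro DERIV_add DERIV_cmult d1 d2)
  have dL: "((\<lambda>x. ln (k * sqrt(1-x^2) + sqrt(1-k^2*x^2))) has_real_derivative
      1 / (k * sqrt(1-x^2) + sqrt(1-k^2*x^2)) * (k*((-2*x)/(2* sqrt(1-x^2))) + (-2*k^2*x)/(2* sqrt(1-k^2*x^2)))) (at x)"
    by (rule DERIV_chain2[OF DERIV_ln_divide[OF A] dA])
  have dG: "((\<lambda>x. -(1/k) * ln (k * sqrt(1-x^2) + sqrt(1-k^2*x^2))) has_real_derivative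
      -(1/k) * (1 / (k * sqrt(1-x^2) + sqrt(1-k^2*x^2)) * (k*((-2*x)/(2* sqrt(1-x^2))) + (-2*k^2*x)/(2* sqrt(1-k^2*x^2))))) (at x)"
    by (rule DERIV_cmult[OF dL])
  have eq: "-(1/k) * (1 / (k * sqrt(1-x^2) + sqrt(1-k^2*x^2)) * (k*((-2*x)/(2* sqrt(1-x^2))) + (-2*k^2*x)/(2* sqrt(1-k^2*x^2))))
     = x / sqrt((1-x^2)*(1-k^2*x^2))"
  proof -
    have gen: "\<And>S1 S2::real. S1 > 0 \<Longrightarrow> S2 > 0 \<Longrightarrow> -(1/k) * (1 / (k * S1 + S2) * (k*((-2*x)/(2* S1)) + (-2*k^2*x)/(2* S2))) = x / (S1* S2)"
    proof -
      fix S1 S2 :: real assume p: "S1 > 0" "S2 > 0"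
      have q: "k * S1 + S2 > 0" using p k by (simp add: add_pos_pos)
      have e1: "k*((-2*x)/(2* S1)) + (-2*k^2*x)/(2* S2) = -(k*x*(k * S1 + S2))/(S1 * S2)"
        using p by (simp add: field_simps power2_eq_square)
      have "-(1/k) * (1 / (k * S1 + S2) * (k*((-2*x)/(2* S1)) + (-2*k^2*x)/(2* S2))) = -(1/k) * (1 / (k * S1 + S2) * (-(k*x*(k * S1 + S2))/(S1 * S2)))"
        by (simp only: e1)
      also have "\<dots> = x / (S1 * S2)" using q k by simp
      finally show "-(1/k) * (1 / (k * S1 + S2) * (k*((-2*x)/(2* S1)) + (-2*k^2*x)/(2* S2))) = x / (S1 * S2)" .
    qed
    show ?thesis using gen[OF s1 s2] by (simp add: real_sqrt_mult)
  qed
  show ?thesis using dG eq by simp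
qed

lemma kx_lt1:
  fixes k x :: real
  assumes "0<k" "k<1" "0 \<le> x" "x \<le> 1"
  shows "k^2 * x^2 < 1"
proof -
  have "k^2 < 1" using assms by (simp add: power_less_one_iff)
  moreover have "x^2 \<le> 1" using assms by (simp add: power_le_one)
  ultimately show ?thesis
    using mult_le_less_imp_less[of "x^2" 1 "k^2" 1] assms by (cases "x = 0") (simp_all add: mult.commute)
qed

lemma int_xf:
  fixes k :: real
  assumes k: "0<k" "k<1"
  shows "((\<lambda>x. x / sqrt((1-x^2)*(1-k^2*x^2))) has_integral ln((1+k)/(1-k))/(2*k)) {0..1}"
proof -
  define G where "G = (\<lambda>x::real. -(1/k) * ln (k * sqrt(1-x^2) + sqrt(1-k^2*x^2)))"
  have pos: "k * sqrt(1-x^2) + sqrt(1-k^2*x^2) > 0" if "x \<in> {0..1}" for x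
  proof -
    have "sqrt(1-k^2*x^2) > 0" using kx_lt1[OF k, of x] that by simp
    moreover have "k * sqrt(1-x^2) \<ge> 0" using that k by (simp add: power_le_one)
    ultimately show ?thesis by linarith
  qed
  have cont: "continuous_on {0..1} G"
    unfolding G_def
    apply (intro continuous_intros ballI)
    using pos by (metis less_irrefl)
  have "((\<lambda>x. x / sqrt((1-x^2)*(1-k^2*x^2))) has_integral (G 1 - G 0)) {0..1}"
    apply (rule fundamental_theorem_of_calculus_interior[OF _ cont])
     apply simp
    unfolding G_def
    apply (subst has_real_derivative_iff_has_vector_derivative[symmetric])
    using derivG[OF k] by simp
  moreover have "G 1 - G 0 = ln((1+k)/(1-k))/(2*k)"
  proof -
    have k2: "0 < 1-k^2" using k by (simp add: power_less_one_iff)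
    have "G 1 = -(1/k) * (ln (1-k^2) / 2)" unfolding G_def using k2 by (simp add: ln_sqrt)
    moreover have "G 0 = -(1/k) * ln (k+1)" unfolding G_def by simp
    moreover have "ln (1-k^2) = ln (1-k) + ln (1+k)"
    proof -
      have "1-k^2 = (1-k)*(1+k)" by (simp add: power2_eq_square algebra_simps)
      thus ?thesis using k by (simp add: ln_mult)
    qed
    moreover have "ln((1+k)/(1-k)) = ln (1+k) - ln (1-k)" using k by (simp add: ln_div)
    ultimately show ?thesis using k by (simp add: field_simps)
  qed
  ultimately show ?thesis by simp
qed


lemma int_q: "((\<lambda>x::real. 1 - 3*x/4 + x^2/4) has_integral 17/24) {0..1}"
proof -
  define Q where "Q = (\<lambda>x::real. x - 3*x^2/8 + x^3/12)"
  have "((\<lambda>x::real. 1 - 3*x/4 + x^2/4) has_integral (Q 1 - Q 0)) {0..1}"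
    apply (rule fundamental_theorem_of_calculus)
     apply simp
    unfolding Q_def
    apply (rule has_vector_derivative_within_subset[of _ _ _ UNIV])
    apply (subst has_real_derivative_iff_has_vector_derivative[symmetric])
    by (auto intro!: derivative_eq_intros simp: field_simps power2_eq_square)
  thus ?thesis unfolding Q_def by simp
qed

lemma r_eq:
  fixes k x :: real
  assumes "0 \<le> x" "x \<le> 1"
  shows "1/sqrt((1-x^2)*(1-k^2*x^2)) = x/sqrt((1-x^2)*(1-k^2*x^2)) + sqrt(1-x)/sqrt((1+x)*(1-k^2*x^2))"
proof (cases "x = 1")
  case True then show ?thesis by simp
next
  case False
  hence x1: "0 < 1-x" using assms by simp
  have e: "(1-x^2)*(1-k^2*x^2) = (1-x) * ((1+x)*(1-k^2*x^2))" by (simp add: power2_eq_square algebra_simps)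
  have "1/sqrt((1-x^2)*(1-k^2*x^2)) - x/sqrt((1-x^2)*(1-k^2*x^2)) = (1-x)/(sqrt(1-x) * sqrt((1+x)*(1-k^2*x^2)))"
    unfolding e real_sqrt_mult by (simp add: diff_divide_distrib)
  also have "\<dots> = sqrt(1-x)/sqrt((1+x)*(1-k^2*x^2))"
  proof -
    have "(1-x) = sqrt(1-x) * sqrt(1-x)" using x1 by simp
    then show ?thesis using x1 by (metis divide_divide_eq_left nonzero_mult_div_cancel_left real_sqrt_gt_0_iff less_irrefl mult.commute times_divide_eq_left)
  qed
  finally show ?thesis by simp
qed


lemma r_le:
  fixes k x :: real
  assumes k: "0<k" "k<1" and x: "0 \<le> x" "x \<le> 1"
  shows "sqrt(1-x)/sqrt((1+x)*(1-k^2*x^2)) \<le> 1 - 3*x/4 + x^2/4"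
proof -
  have b: "0 < 1-k^2*x^2" using kx_lt1[OF k x] by simp
  have D: "0 < sqrt((1+x)*(1-k^2*x^2))" using b x by simp
  have kk: "k^2*x^2 \<le> x^2" using k by (simp add: mult_left_le_one_le power_le_one)
  have "(1-x)*(1+x)^2 = (1+x)*(1-x^2)" by (simp add: power2_eq_square algebra_simps)
  also have "\<dots> \<le> (1+x)*(1-k^2*x^2)" using kk x by (intro mult_left_mono) auto
  finally have "sqrt((1-x)*(1+x)^2) \<le> sqrt((1+x)*(1-k^2*x^2))" by simp
  hence h: "sqrt(1-x)*(1+x) \<le> sqrt((1+x)*(1-k^2*x^2))" using x by (simp add: real_sqrt_mult)
  have "sqrt(1-x)/sqrt((1+x)*(1-k^2*x^2)) \<le> 1/(1+x)"
    using h D x by (simp add: divide_simps mult.commute)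
  also have "\<dots> \<le> 1 - 3*x/4 + x^2/4"
  proof -
    have "(1 - 3*x/4 + x^2/4)*(1+x) - 1 = x*(1-x)^2/4" by (simp add: power2_eq_square power3_eq_cube field_simps)
    moreover have "x*(1-x)^2/4 \<ge> 0" using x by simp
    ultimately have "1 \<le> (1 - 3*x/4 + x^2/4)*(1+x)" by linarith
    thus ?thesis using x by (simp add: divide_simps)
  qed
  finally show ?thesis .
qed

lemma ellip_core:
  fixes k :: real
  assumes k: "0<k" "k<1"
  shows "\<exists>R. ((\<lambda>x. 1/sqrt((1-x^2)*(1-k^2*x^2))) has_integral (ln((1+k)/(1-k))/(2*k) + R)) {0..1} \<and> 0 \<le> R \<and> R \<le> 17/24"
proof -
  define r where "r = (\<lambda>x::real. sqrt(1-x)/sqrt((1+x)*(1-k^2*x^2)))"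
  have cont: "continuous_on {0..1} r"
    unfolding r_def
    apply (intro continuous_intros ballI)
    subgoal for x using kx_lt1[OF k, of x] by simp
    done
  have ri: "(r has_integral (integral {0..1} r)) {0..1}"
    using integrable_continuous_interval[OF cont] by (simp add: integrable_integral)
  have sum: "((\<lambda>x. x / sqrt((1-x^2)*(1-k^2*x^2)) + r x) has_integral (ln((1+k)/(1-k))/(2*k) + integral {0..1} r)) {0..1}"
    by (rule has_integral_add[OF int_xf[OF k] ri])
  have main: "((\<lambda>x. 1/sqrt((1-x^2)*(1-k^2*x^2))) has_integral (ln((1+k)/(1-k))/(2*k) + integral {0..1} r)) {0..1}"
    using sum by (subst has_integral_cong[where g="\<lambda>x. x / sqrt((1-x^2)*(1-k^2*x^2)) + r x"]) (auto simp: r_def intro: r_eq)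
  have "0 \<le> integral {0..1} r"
  proof (rule has_integral_nonneg[OF ri])
    fix x :: real assume x: "x \<in> {0..1}"
    have "0 < 1-k^2*x^2" using kx_lt1[OF k, of x] x by simp
    thus "0 \<le> r x" using x unfolding r_def by (intro divide_nonneg_nonneg) auto
  qed
  moreover have "integral {0..1} r \<le> 17/24"
    by (rule has_integral_le[OF ri int_q]) (auto simp: r_def intro: r_le[OF k])
  ultimately show ?thesis using main by blast
qed


lemma integrand_eq:
  fixes M x :: real
  assumes M: "M > 0" and x: "0 \<le> x" "x \<le> 1"
  shows "FM_integrand M (linepath 0 (\<i> * of_real M) x) * (\<i> * of_real M - 0)
       = \<i> / of_real (M+1) * of_real (1/sqrt((1-x^2)*(1-(M/(M+1))^2*x^2)))"
proof -
  define P where "P = (M^2 - x^2*M^2)*((M+1)^2 - x^2*M^2)"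
  have lp: "linepath 0 (\<i> * of_real M) x = of_real x * (\<i> * of_real M)"
    by (simp add: linepath_def scaleR_conv_of_real)
  have arg: "((of_real x * (\<i> * of_real M))^2 - (\<i> * of_real M)^2) * ((of_real x * (\<i> * of_real M))^2 - (\<i> * of_real (M+1))^2)
      = (of_real P :: complex)"
  proof -
    have e1: "(of_real x * (\<i> * of_real M))^2 = - (of_real (x^2*M^2)::complex)" by (simp add: power_mult_distrib)
    have e2: "(\<i> * of_real M)^2 = - (of_real (M^2)::complex)" by (simp add: power_mult_distrib)
    have e3: "(\<i> * of_real (M+1))^2 = - (of_real ((M+1)^2)::complex)" by (simp add: power_mult_distrib del: of_real_add)
    show ?thesis unfolding e1 e2 e3 P_def by simp
  qed
  have x2: "x^2 \<le> 1" using x by (simp add: power_le_one)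
  have P0: "P \<ge> 0"
  proof -
    have "x^2*M^2 \<le> M^2" using x2 by (simp add: mult_left_le_one_le)
    moreover have "M^2 \<le> (M+1)^2" using M by (simp add: power_mono)
    ultimately show ?thesis unfolding P_def by simp
  qed
  define S where "S = sqrt((1-x^2)*(1-(M/(M+1))^2*x^2))"
  have k: "0 < M/(M+1)" "M/(M+1) < 1" using M by auto
  have S0: "S \<ge> 0" unfolding S_def using x2 kx_lt1[OF k x] by simp
  have PS: "sqrt P = M*(M+1)*S"
  proof -
    have "P = (M*(M+1))^2 * ((1-x^2)*(1-(M/(M+1))^2*x^2))"
    proof -
      have "(M+1)^2*(1-(M/(M+1))^2*x^2) = (M+1)^2 - M^2*x^2" using M by (simp add: power_divide field_simps)
      hence "(M*(M+1))^2 * ((1-x^2)*(1-(M/(M+1))^2*x^2)) = (M^2*(1-x^2)) * ((M+1)^2 - M^2*x^2)"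
        by (simp add: power_mult_distrib mult.assoc mult.left_commute)
      thus ?thesis unfolding P_def by (simp add: algebra_simps)
    qed
    thus ?thesis unfolding S_def using M by (simp add: real_sqrt_mult)
  qed
  have F: "FM_integrand M (linepath 0 (\<i> * of_real M) x) = 1 / of_real (M*(M+1)*S)"
    unfolding FM_integrand_def lp arg using P0 PS by simp
  show ?thesis
  proof (cases "S = 0")
    case True then show ?thesis using F unfolding S_def[symmetric] by simp
  next
    case False
    have gen: "\<And>a b c::complex. a\<noteq>0 \<Longrightarrow> b\<noteq>0 \<Longrightarrow> c\<noteq>0 \<Longrightarrow> 1/(a*b*c)*(\<i>*a) = \<i>/b * (1/c)"
      by (simp add: field_simps)
    have "1/(complex_of_real M * complex_of_real (M+1) * complex_of_real S)*(\<i>*complex_of_real M) = \<i>/complex_of_real (M+1) * (1/complex_of_real S)"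
      apply (rule gen) using M False by (simp_all del: of_real_add)
    then show ?thesis using F unfolding S_def[symmetric] of_real_mult[symmetric] of_real_divide of_real_1
      by simp
  qed
qed


lemma subst_part:
  fixes M I :: real
  assumes M: "M > 0"
    and I: "((\<lambda>x. 1/sqrt((1-x^2)*(1-(M/(M+1))^2*x^2))) has_integral I) {0..1}"
  shows "((\<lambda>t. 1 / sqrt ((M^2 - t^2) * ((M+1)^2 - t^2))) has_integral (I/(M+1))) {0..M}"
proof -
  define f where "f = (\<lambda>x. 1/sqrt((1-x^2)*(1-(M/(M+1))^2*x^2)) / (M*(M+1)))"
  have fI: "(f has_integral (I/(M*(M+1)))) (cbox 0 1)"
    unfolding f_def cbox_interval using has_integral_divide[OF I] by simp
  have "((\<lambda>x. f ((1/M) *\<^sub>R x + 0)) has_integral (1 / (\<bar>1/M\<bar> ^ DIM(real))) *\<^sub>R (I/(M*(M+1))))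
        ((\<lambda>x. (1 / (1/M)) *\<^sub>R x + -((1 / (1/M)) *\<^sub>R 0)) ` cbox 0 1)"
    by (rule has_integral_affinity[OF fI]) (use M in simp)
  moreover have "(\<lambda>x. (1 / (1/M)) *\<^sub>R x + -((1 / (1/M)) *\<^sub>R 0)) ` cbox 0 1 = {0..M}"
  proof -
    have "(\<lambda>x. (1 / (1/M)) *\<^sub>R x + -((1 / (1/M)) *\<^sub>R 0)) ` cbox 0 1 = (\<lambda>x. M * x + 0) ` {0..1}"
      by (simp add: cbox_interval)
    also have "\<dots> = {0..M}" by (subst image_affinity_atLeastAtMost) (use M in simp)
    finally show ?thesis .
  qed
  moreover have "(1 / (\<bar>1/M\<bar> ^ DIM(real))) *\<^sub>R (I/(M*(M+1))) = I/(M+1)" using M by simp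
  moreover have "f ((1/M) *\<^sub>R t + 0) = 1 / sqrt ((M^2 - t^2) * ((M+1)^2 - t^2))" for t
  proof -
    have "(1-(t/M)^2)*(1-(M/(M+1))^2*(t/M)^2) = ((M^2 - t^2) * ((M+1)^2 - t^2)) / (M*(M+1))^2"
    proof -
      have a: "(M/(M+1))^2*(t/M)^2 = t^2/(M+1)^2" using M by (simp add: power_divide)
      have b: "(M*(M+1))^2 = M^2*(M+1)^2" by (simp add: power_mult_distrib)
      show ?thesis unfolding a b using M by (simp add: power_divide field_simps)
    qed
    hence "sqrt ((1-(t/M)^2)*(1-(M/(M+1))^2*(t/M)^2)) = sqrt ((M^2 - t^2) * ((M+1)^2 - t^2)) / (M*(M+1))"
      using M by (simp add: real_sqrt_divide)
    thus ?thesis unfolding f_def using M by (simp add: divide_simps)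
  qed
  ultimately show ?thesis by simp
qed


lemma exp1_gt: "exp (1::real) > 27/10"
  using e_approx_32 by (simp add: abs_if split: if_splits)

theorem lemma14:
  fixes M :: real
  assumes "M \<ge> 2"
  shows "of_real (M+1) / \<i> * FM_at_iM M
           = of_real ((M+1) * integral {0..M} (\<lambda>t. 1 / sqrt ((M^2 - t^2) * ((M+1)^2 - t^2))))
       \<and> of_real (M+1) / \<i> * FM_at_iM M = of_real (ellipK (M / (M+1)))
       \<and> ln (2*M+1) / 2 < ellipK (M / (M+1))
       \<and> ellipK (M / (M+1)) < (12/5 + ln (2*M+1)) / 2"
proof -
  define k where "k = M/(M+1)"
  have M: "M > 0" using assms by simp
  have k: "0 < k" "k < 1" unfolding k_def using M by auto
  obtain R where I0: "((\<lambda>x. 1/sqrt((1-x^2)*(1-k^2*x^2))) has_integral (ln((1+k)/(1-k))/(2*k) + R)) {0..1}"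
    and R: "0 \<le> R" "R \<le> 17/24" using ellip_core[OF k] by blast
  define I where "I = ln((1+k)/(1-k))/(2*k) + R"
  have I: "((\<lambda>x. 1/sqrt((1-x^2)*(1-(M/(M+1))^2*x^2))) has_integral I) {0..1}"
    using I0 unfolding I_def k_def .
  have L: "ln((1+k)/(1-k)) = ln(2*M+1)"
  proof -
    have "(1+k)/(1-k) = 2*M+1" unfolding k_def using M by (simp add: field_simps)
    thus ?thesis by simp
  qed
  have EK: "ellipK (M/(M+1)) = I" unfolding ellipK_def by (rule integral_unique[OF I])
  have hc: "(FM_integrand M has_contour_integral (\<i>/of_real(M+1) * of_real I)) (linepath 0 (\<i> * of_real M))"
    unfolding has_contour_integral_linepath
    apply (subst has_integral_cong[where g = "\<lambda>x. \<i>/of_real(M+1) * of_real(1/sqrt((1-x^2)*(1-(M/(M+1))^2*x^2)))"])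
    using integrand_eq[OF M] apply simp
    by (rule has_integral_mult_right[OF has_integral_of_real[OF I]])
  have C: "of_real (M+1) / \<i> * FM_at_iM M = of_real I"
  proof -
    have "FM_at_iM M = \<i>/of_real(M+1) * of_real I" unfolding FM_at_iM_def by (rule contour_integral_unique[OF hc])
    moreover have "complex_of_real (M+1) \<noteq> 0" using M by (simp del: of_real_add) 
    ultimately show ?thesis by (simp add: field_simps del: of_real_add)
  qed
  have Sb: "(M+1) * integral {0..M} (\<lambda>t. 1 / sqrt ((M^2 - t^2) * ((M+1)^2 - t^2))) = I"
    using integral_unique[OF subst_part[OF M I]] M by simp
  have lnpos: "ln (2*M+1) > 0" using M by simp
  have Ieq: "I = ln(2*M+1)/2 + ln(2*M+1)/(2*M) + R"
    unfolding I_def L unfolding k_def using M by (simp add: field_simps)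
  have lnb: "ln (2*M+1) < 59*M/60"
  proof -
    have "ln ((2*M+1)/exp 1) \<le> (2*M+1)/exp 1 - 1" using M by (intro ln_le_minus_one) simp
    hence "ln (2*M+1) \<le> (2*M+1)/exp 1" using M by (simp add: ln_div)
    also have "\<dots> < (2*M+1)/(27/10)" using exp1_gt M by (intro divide_strict_left_mono) auto
    also have "\<dots> \<le> 59*M/60" using assms by simp
    finally show ?thesis .
  qed
  have low: "ln (2*M+1) / 2 < I"
  proof -
    have "ln(2*M+1)/(2*M) > 0" using lnpos M by simp
    thus ?thesis using Ieq R by linarith
  qed
  have up: "I < (12/5 + ln (2*M+1)) / 2"
  proof -
    have a: "ln(2*M+1)/(2*M) < 59/120" using lnb M by (simp add: field_simps)
    have "I < ln(2*M+1)/2 + 6/5"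
      unfolding Ieq using a R(2) by linarith
    thus ?thesis by simp
  qed
  show ?thesis using C Sb EK low up by simp
qed

end
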